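(* Let $\mathcal E$ be a nest on a complex Banach space $X$ and let $\Phi,\Theta$ be admissible support functions on $\mathcal E$ such that $\mathcal M(\Phi)=\mathcal M(\Theta)$. Then $\Phi(E)=\Theta(E)$ for every $E\in\mathcal E\setminus\{\{0\}\}$.
   Context: A nest $\mathcal E$ on $X$ is a family of closed linear subspaces of $X$, totally ordered by inclusion, containing $\{0\}$ and $X$, closed under arbitrary meets $\wedge$ (intersections) and joins $\vee$ (norm-closed linear spans of unions). For $E\in\mathcal E$, $E_-=\vee\{F\in\mathcal E: F\subsetneq E\}$. A support function on $\mathcal E$ is an inclusion-preserving map $\Phi:\mathcal E\to\mathcal E$; it is admissible if for every $N\in\mathcal E\setminus\{\{0\}\}$, $\vee_{E\in\mathcal E,E\subsetneq N}\Phi(E)=\Phi(N_-)$. For a support function $\Phi$, $\mathcal M(\Phi)=\{T\in\mathcal B(X): TE\subseteq\Phi(E)\ \forall E\in\mathcal E\}$. *)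

theory Defs
  imports "HOL-Analysis.Analysis"
begin

text \<open>Complex normed vector spaces: a real normed vector space with a compatible
  complex scalar multiplication (the library has no complex vector space classes).\<close>

class complex_normed_vector = real_normed_vector +
  fixes scaleC :: "complex \<Rightarrow> 'a \<Rightarrow> 'a"
  assumes scaleC_add_right: "scaleC a (x + y) = scaleC a x + scaleC a y"
    and scaleC_add_left: "scaleC (a + b) x = scaleC a x + scaleC b x"
    and scaleC_scaleC: "scaleC a (scaleC b x) = scaleC (a * b) x"
    and scaleC_one: "scaleC 1 x = x"
    and scaleR_scaleC: "scaleR r x = scaleC (complex_of_real r) x"
    and norm_scaleC: "norm (scaleC a x) = cmod a * norm x"

class complex_banach = complex_normed_vector + banach

definition csubspace :: "'a::complex_normed_vector set \<Rightarrow> bool" where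
  "csubspace S \<longleftrightarrow> 0 \<in> S \<and> (\<forall>x\<in>S. \<forall>y\<in>S. x + y \<in> S) \<and> (\<forall>c. \<forall>x\<in>S. scaleC c x \<in> S)"

definition closed_csubspace :: "'a::complex_normed_vector set \<Rightarrow> bool" where
  "closed_csubspace S \<longleftrightarrow> csubspace S \<and> closed S"

definition cspan :: "'a::complex_normed_vector set \<Rightarrow> 'a set" where
  "cspan S = \<Inter>{V. csubspace V \<and> S \<subseteq> V}"

definition sjoin :: "'a::complex_normed_vector set set \<Rightarrow> 'a set" where
  "sjoin F = closure (cspan (\<Union>F))"

text \<open>Meet of a family of subspaces: intersection (the empty meet is the whole space).\<close>
definition smeet :: "'a::complex_normed_vector set set \<Rightarrow> 'a set" where
  "smeet F = \<Inter>F"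

definition clinear :: "('a::complex_normed_vector \<Rightarrow> 'b::complex_normed_vector) \<Rightarrow> bool" where
  "clinear T \<longleftrightarrow> (\<forall>x y. T (x + y) = T x + T y) \<and> (\<forall>c x. T (scaleC c x) = scaleC c (T x))"

definition bounded_clinear :: "('a::complex_normed_vector \<Rightarrow> 'b::complex_normed_vector) \<Rightarrow> bool" where
  "bounded_clinear T \<longleftrightarrow> clinear T \<and> (\<exists>K. \<forall>x. norm (T x) \<le> norm x * K)"

definition nest :: "'a::complex_normed_vector set set \<Rightarrow> bool" where
  "nest \<E> \<longleftrightarrow>
     (\<forall>E\<in>\<E>. closed_csubspace E) \<and>
     (\<forall>E\<in>\<E>. \<forall>F\<in>\<E>. E \<subseteq> F \<or> F \<subseteq> E) \<and>
     {0} \<in> \<E> \<and> UNIV \<in> \<E> \<and>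
     (\<forall>F. F \<subseteq> \<E> \<longrightarrow> smeet F \<in> \<E>) \<and>
     (\<forall>F. F \<subseteq> \<E> \<longrightarrow> sjoin F \<in> \<E>)"

definition pred_nest :: "'a::complex_normed_vector set set \<Rightarrow> 'a set \<Rightarrow> 'a set" where
  "pred_nest \<E> E = sjoin {F\<in>\<E>. F \<subset> E}"

definition support_function ::
    "'a::complex_normed_vector set set \<Rightarrow> ('a set \<Rightarrow> 'a set) \<Rightarrow> bool" where
  "support_function \<E> \<Phi> \<longleftrightarrow>
     (\<forall>E\<in>\<E>. \<Phi> E \<in> \<E>) \<and> (\<forall>E\<in>\<E>. \<forall>F\<in>\<E>. E \<subseteq> F \<longrightarrow> \<Phi> E \<subseteq> \<Phi> F)"

definition admissible ::
    "'a::complex_normed_vector set set \<Rightarrow> ('a set \<Rightarrow> 'a set) \<Rightarrow> bool" where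
  "admissible \<E> \<Phi> \<longleftrightarrow> support_function \<E> \<Phi> \<and>
     (\<forall>N\<in>\<E>. N \<noteq> {0} \<longrightarrow> sjoin (\<Phi> ` {E\<in>\<E>. E \<subset> N}) = \<Phi> (pred_nest \<E> N))"

definition M_space ::
    "'a::complex_normed_vector set set \<Rightarrow> ('a set \<Rightarrow> 'a set) \<Rightarrow> ('a \<Rightarrow> 'a) set" where
  "M_space \<E> \<Phi> = {T. bounded_clinear T \<and> (\<forall>E\<in>\<E>. T ` E \<subseteq> \<Phi> E)}"

end

theory Submission
  imports Defs
begin

definition lsub :: "('a::real_normed_vector \<times> real) set \<Rightarrow> bool" where
 "lsub G \<longleftrightarrow> (0,0) \<in> G \<and> (\<forall>x a y b. (x,a)\<in>G \<longrightarrow> (y,b)\<in>G \<longrightarrow> (x+y, a+b) \<in> G)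
     \<and> (\<forall>c x a. (x,a)\<in>G \<longrightarrow> (c *\<^sub>R x, c*a) \<in> G)"

lemma lsub_fun:
  assumes "lsub G" "\<forall>(x,a)\<in>G. a \<le> K * norm x" "(x,a)\<in>G" "(x,b)\<in>G"
  shows "a = b"
proof -
  have "((-1) *\<^sub>R x, (-1)*b) \<in> G" using assms(1,4) unfolding lsub_def by blast
  then have 1: "(x + (-1) *\<^sub>R x, a + (-1)*b) \<in> G" using assms(1,3) unfolding lsub_def by blast
  have "((-1) *\<^sub>R x, (-1)*a) \<in> G" using assms(1,3) unfolding lsub_def by blast
  then have 2: "(x + (-1) *\<^sub>R x, b + (-1)*a) \<in> G" using assms(1,4) unfolding lsub_def by blast
  from 1 2 assms(2) have "a - b \<le> 0" "b - a \<le> 0" by auto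
  then show ?thesis by simp
qed

lemma HB_real:
  fixes G0 :: "('a::real_normed_vector \<times> real) set" and K :: real
  assumes K: "K \<ge> 0" and G0: "lsub G0" "\<forall>(x,a)\<in>G0. a \<le> K * norm x"
  shows "\<exists>h. (\<forall>x y. h(x+y) = h x + h y) \<and> (\<forall>c x. h(c *\<^sub>R x) = c * h x)
     \<and> (\<forall>x. h x \<le> K * norm x) \<and> (\<forall>(x,a)\<in>G0. h x = a)"
proof -
  define A where "A = {G. lsub G \<and> G0 \<subseteq> G \<and> (\<forall>(x,a)\<in>G. a \<le> K * norm x)}"
  have "\<forall>C\<in>chains A. \<exists>U\<in>A. \<forall>X\<in>C. X \<subseteq> U"
  proof
    fix C assume C: "C \<in> chains A"
    show "\<exists>U\<in>A. \<forall>X\<in>C. X \<subseteq> U"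
    proof (cases "C = {}")
      case True then show ?thesis using G0 by (auto simp: A_def)
    next
      case False
      have CA: "C \<subseteq> A" using C chainsD2 by blast
      have "\<Union>C \<in> A" unfolding A_def lsub_def
      proof (intro CollectI conjI allI impI)
        show "(0,0) \<in> \<Union>C" using False CA by (auto simp: A_def lsub_def)
        show "G0 \<subseteq> \<Union>C" using False CA by (auto simp: A_def)
        show "\<forall>(x,a)\<in>\<Union>C. a \<le> K * norm x" using CA by (auto simp: A_def)
      next
        fix x a y b assume "(x,a) \<in> \<Union>C" "(y,b) \<in> \<Union>C"
        then obtain G1 G2 where g: "G1 \<in> C" "G2 \<in> C" "(x,a)\<in>G1" "(y,b)\<in>G2" by auto
        from chainsD[OF C g(1,2)] g show "(x+y, a+b) \<in> \<Union>C"
          using CA unfolding A_def lsub_def by blast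
      next
        fix c x a assume "(x,a) \<in> \<Union>C"
        then show "(c *\<^sub>R x, c*a) \<in> \<Union>C" using CA unfolding A_def lsub_def by blast
      qed
      then show ?thesis by blast
    qed
  qed
  from Zorn_Lemma2[OF this] obtain M where MA: "M \<in> A" and Mmax: "\<forall>X\<in>A. M \<subseteq> X \<longrightarrow> X = M"
    by blast
  have Ml: "lsub M" and MG0: "G0 \<subseteq> M" and Mb: "\<forall>(x,a)\<in>M. a \<le> K * norm x"
    using MA by (auto simp: A_def)
  have Madd: "(x+y, a+b) \<in> M" if "(x,a)\<in>M" "(y,b)\<in>M" for x a y b
    using Ml that unfolding lsub_def by blast
  have Msc: "(c *\<^sub>R x, c*a) \<in> M" if "(x,a)\<in>M" for c x a
    using Ml that unfolding lsub_def by blast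
  have M0: "(0,0) \<in> M" using Ml unfolding lsub_def by blast
  have Mfun: "a = b" if "(x,a)\<in>M" "(x,b)\<in>M" for x a b
    using lsub_fun[OF Ml Mb that] .
  have total: "\<exists>a. (z,a) \<in> M" for z
  proof (rule ccontr)
    assume nz: "\<not> (\<exists>a. (z,a) \<in> M)"
    define S where "S = {b - K * norm (y - z) | y b. (y,b) \<in> M}"
    have key: "b - K * norm (y - z) \<le> K * norm (y' + z) - b'"
      if "(y,b)\<in>M" "(y',b')\<in>M" for y b y' b'
    proof -
      have "b + b' \<le> K * norm (y + y')" using Mb Madd[OF that] by auto
      also have "norm (y + y') \<le> norm (y - z) + norm (y' + z)"
        using norm_triangle_ineq[of "y - z" "y' + z"] by simp
      then have "K * norm (y + y') \<le> K * (norm (y - z) + norm (y' + z))"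
        using K by (rule mult_left_mono)
      finally show ?thesis by (simp add: algebra_simps)
    qed
    have Sne: "S \<noteq> {}" using M0 by (auto simp: S_def)
    have Sbdd: "bdd_above S" unfolding bdd_above_def S_def
      using key[OF _ M0] by auto
    define c where "c = Sup S"
    have ci: "b - K * norm (y - z) \<le> c" if "(y,b)\<in>M" for y b
      unfolding c_def by (rule cSup_upper[OF _ Sbdd]) (use that in \<open>auto simp: S_def\<close>)
    have cii: "c \<le> K * norm (y' + z) - b'" if "(y',b')\<in>M" for y' b'
      unfolding c_def by (rule cSup_least[OF Sne]) (use key that in \<open>auto simp: S_def\<close>)
    define M' where "M' = {(x + t *\<^sub>R z, a + t*c) | x a t. (x,a)\<in>M}"
    have MM': "M \<subseteq> M'" unfolding M'_def by force
    have bnd: "a + t*c \<le> K * norm (x + t *\<^sub>R z)" if xa: "(x,a)\<in>M" for x a t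
    proof -
      consider "t = 0" | "t > 0" | "t < 0" by linarith
      then show ?thesis
      proof cases
        case 1 then show ?thesis using Mb xa by auto
      next
        case 2
        have "(inverse t *\<^sub>R x, inverse t * a) \<in> M" using Msc[OF xa] .
        from cii[OF this] have "t * c \<le> t * (K * norm (inverse t *\<^sub>R x + z) - inverse t * a)"
          using 2 by (simp add: mult_left_mono)
        also have "\<dots> = K * (t * norm (inverse t *\<^sub>R x + z)) - a" using 2 by (simp add: algebra_simps)
        also have "t * norm (inverse t *\<^sub>R x + z) = norm (t *\<^sub>R (inverse t *\<^sub>R x + z))"
          using 2 by simp
        also have "t *\<^sub>R (inverse t *\<^sub>R x + z) = x + t *\<^sub>R z" using 2
          by (simp add: scaleR_add_right)
        finally show ?thesis by simp
      next
        case 3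
        define s where "s = - t"
        have s: "s > 0" using 3 by (simp add: s_def)
        have "(inverse s *\<^sub>R x, inverse s * a) \<in> M" using Msc[OF xa] .
        from ci[OF this] have "s * (inverse s * a - K * norm (inverse s *\<^sub>R x - z)) \<le> s * c"
          using s by (simp add: mult_left_mono)
        then have "a - K * (s * norm (inverse s *\<^sub>R x - z)) \<le> s * c" using s by (simp add: algebra_simps)
        also have "s * norm (inverse s *\<^sub>R x - z) = norm (s *\<^sub>R (inverse s *\<^sub>R x - z))"
          using s by simp
        also have "s *\<^sub>R (inverse s *\<^sub>R x - z) = x + t *\<^sub>R z" using s
          by (simp add: scaleR_diff_right s_def)
        finally show ?thesis by (simp add: s_def)
      qed
    qed
    have "M' \<in> A" unfolding A_def lsub_def
    proof (intro CollectI conjI allI impI)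
      show "(0,0) \<in> M'" unfolding M'_def using M0 by force
      show "G0 \<subseteq> M'" using MG0 MM' by blast
      show "\<forall>(x,a)\<in>M'. a \<le> K * norm x" unfolding M'_def using bnd by auto
    next
      fix x a y b assume "(x,a) \<in> M'" "(y,b) \<in> M'"
      then obtain x1 a1 t1 x2 a2 t2 where h: "(x1,a1)\<in>M" "(x2,a2)\<in>M"
        "x = x1 + t1 *\<^sub>R z" "a = a1 + t1 * c" "y = x2 + t2 *\<^sub>R z" "b = a2 + t2 * c"
        unfolding M'_def by blast
      have "(x+y, a+b) = ((x1+x2) + (t1+t2) *\<^sub>R z, (a1+a2) + (t1+t2)*c)"
        using h by (simp add: algebra_simps)
      then show "(x+y, a+b) \<in> M'" unfolding M'_def using Madd[OF h(1,2)] by blast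
    next
      fix d x a assume "(x,a) \<in> M'"
      then obtain x1 a1 t1 where h: "(x1,a1)\<in>M" "x = x1 + t1 *\<^sub>R z" "a = a1 + t1 * c"
        unfolding M'_def by blast
      have "(d *\<^sub>R x, d*a) = (d *\<^sub>R x1 + (d*t1) *\<^sub>R z, d*a1 + (d*t1)*c)"
        using h by (simp add: algebra_simps)
      then show "(d *\<^sub>R x, d*a) \<in> M'" unfolding M'_def using Msc[OF h(1)] by blast
    qed
    with Mmax MM' have "M' = M" by blast
    moreover have "(z, c) \<in> M'" unfolding M'_def using M0 by force
    ultimately show False using nz by blast
  qed
  define h where "h z = (THE a. (z,a)\<in>M)" for z
  have hM: "(z, h z) \<in> M" for z
    unfolding h_def by (rule theI') (use total Mfun in blast)
  have hE: "h z = a" if "(z,a)\<in>M" for z a using Mfun[OF hM that] .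
  show ?thesis
  proof (intro exI conjI allI)
    show "h (x+y) = h x + h y" for x y using hE[OF Madd[OF hM hM]] .
    show "h (c *\<^sub>R x) = c * h x" for c x using hE[OF Msc[OF hM]] .
    show "h x \<le> K * norm x" for x using Mb hM by auto
    show "\<forall>(x,a)\<in>G0. h x = a" using hE MG0 by auto
  qed
qed


lemma csub_add: "csubspace S \<Longrightarrow> x \<in> S \<Longrightarrow> y \<in> S \<Longrightarrow> x + y \<in> S"
  unfolding csubspace_def by blast
lemma csub_scaleC: "csubspace S \<Longrightarrow> x \<in> S \<Longrightarrow> scaleC c x \<in> S"
  unfolding csubspace_def by blast
lemma csub_0: "csubspace S \<Longrightarrow> 0 \<in> S"
  unfolding csubspace_def by blast
lemma csub_scaleR: "csubspace S \<Longrightarrow> x \<in> S \<Longrightarrow> scaleR c x \<in> S"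
  by (simp add: scaleR_scaleC csub_scaleC)

lemma scaleC_zero_left[simp]: "scaleC 0 (x::'a::complex_normed_vector) = 0"
  using scaleR_scaleC[of 0 x] by simp

lemma scaleC_Complex: "scaleC (Complex a b) (x::'a::complex_normed_vector) = a *\<^sub>R x + b *\<^sub>R scaleC \<i> x"
proof -
  have "Complex a b = complex_of_real a + complex_of_real b * \<i>" by (simp add: complex_eq_iff)
  then show ?thesis by (simp add: scaleC_add_left scaleC_scaleC[symmetric] scaleR_scaleC)
qed

lemma sep:
  fixes F :: "'a::complex_normed_vector set"
  assumes FC: "closed_csubspace F" and x0: "x0 \<notin> F"
  shows "\<exists>\<phi>::'a\<Rightarrow>complex. (\<forall>x y. \<phi>(x+y) = \<phi> x + \<phi> y) \<and> (\<forall>c x. \<phi>(scaleC c x) = c * \<phi> x)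
     \<and> (\<exists>K. \<forall>x. cmod(\<phi> x) \<le> norm x * K) \<and> (\<forall>m\<in>F. \<phi> m = 0) \<and> \<phi> x0 = 1"
proof -
  have Fs: "csubspace F" and Fc: "closed F" using FC by (auto simp: closed_csubspace_def)
  have Fne: "F \<noteq> {}" using csub_0[OF Fs] by blast
  define d where "d = infdist x0 F"
  have d: "d > 0" unfolding d_def by (rule infdist_pos_not_in_closed[OF Fc Fne x0])
  define K where "K = 1 / d"
  have K: "K \<ge> 0" using d by (simp add: K_def)
  define G0 where "G0 = {(m + t *\<^sub>R x0, t) | m t. m \<in> F}"
  have "lsub G0" unfolding lsub_def
  proof (intro conjI allI impI)
    show "(0,0) \<in> G0" unfolding G0_def using csub_0[OF Fs] by force
  next
    fix x a y b assume "(x,a)\<in>G0" "(y,b)\<in>G0"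
    then obtain m1 m2 where "m1 \<in> F" "m2 \<in> F" "x = m1 + a *\<^sub>R x0" "y = m2 + b *\<^sub>R x0"
      unfolding G0_def by blast
    then show "(x+y, a+b) \<in> G0" unfolding G0_def using csub_add[OF Fs]
      by (auto simp: algebra_simps intro!: exI[of _ "m1+m2"])
  next
    fix c x a assume "(x,a)\<in>G0"
    then obtain m where "m \<in> F" "x = m + a *\<^sub>R x0" unfolding G0_def by blast
    then show "(c *\<^sub>R x, c*a) \<in> G0" unfolding G0_def using csub_scaleR[OF Fs]
      by (auto simp: algebra_simps intro!: exI[of _ "c *\<^sub>R m"])
  qed
  moreover have "\<forall>(x,a)\<in>G0. a \<le> K * norm x"
  proof (clarify)
    fix x a assume "(x,a)\<in>G0"
    then obtain m where m: "m \<in> F" "x = m + a *\<^sub>R x0" unfolding G0_def by blast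
    show "a \<le> K * norm x"
    proof (cases "a > 0")
      case False then show ?thesis using K by (smt (verit) mult_nonneg_nonneg norm_ge_zero)
    next
      case True
      have "- (inverse a *\<^sub>R m) \<in> F" using csub_scaleR[OF Fs m(1), of "- inverse a"] by simp
      then have "d \<le> dist x0 (- (inverse a *\<^sub>R m))" unfolding d_def by (rule infdist_le)
      also have "\<dots> = norm (x0 + inverse a *\<^sub>R m)" by (simp add: dist_norm)
      finally have "a * d \<le> a * norm (x0 + inverse a *\<^sub>R m)" using True by simp
      also have "\<dots> = norm (a *\<^sub>R (x0 + inverse a *\<^sub>R m))" using True by simp
      also have "a *\<^sub>R (x0 + inverse a *\<^sub>R m) = x" using True m(2) by (simp add: scaleR_add_right)
      finally show ?thesis using d by (simp add: K_def field_simps)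
    qed
  qed
  ultimately obtain h where hadd: "\<forall>x y. h(x+y) = h x + h y" and hsc: "\<forall>c x. h(c *\<^sub>R x) = c * h x"
    and hb: "\<forall>x. h x \<le> K * norm x" and hG: "\<forall>(x,a)\<in>G0. h x = a"
    using HB_real[OF K] by blast
  have hF: "h m = 0" if "m \<in> F" for m
  proof -
    have "(m + 0 *\<^sub>R x0, 0) \<in> G0" unfolding G0_def using that by blast
    then show ?thesis using hG by auto
  qed
  have hx0: "h x0 = 1"
  proof -
    have "(0 + 1 *\<^sub>R x0, 1) \<in> G0" unfolding G0_def using csub_0[OF Fs] by blast
    then show ?thesis using hG by auto
  qed
  have habs: "\<bar>h x\<bar> \<le> K * norm x" for x
  proof -
    have "h ((-1) *\<^sub>R x) \<le> K * norm ((-1) *\<^sub>R x)" using hb by blast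
    moreover have "h ((-1) *\<^sub>R x) = - h x" using hsc by (metis mult_minus1)
    ultimately have "- h x \<le> K * norm x" by simp
    moreover have "h x \<le> K * norm x" using hb by blast
    ultimately show ?thesis by (simp add: abs_le_iff)
  qed
  define f where "f x = Complex (h x) (- h (scaleC \<i> x))" for x
  have fadd: "f (x+y) = f x + f y" for x y
    unfolding f_def by (simp add: scaleC_add_right hadd complex_eq_iff)
  have hC: "h (scaleC (Complex a b) x) = a * h x + b * h (scaleC \<i> x)" for a b x
    by (simp add: scaleC_Complex hadd hsc)
  have fsc: "f (scaleC c x) = c * f x" for c x
  proof (cases c)
    case (Complex a b)
    have "\<i> * c = Complex (-b) a" using Complex by (simp add: complex_eq_iff)
    then have "scaleC \<i> (scaleC c x) = scaleC (Complex (-b) a) x"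
      by (simp add: scaleC_scaleC)
    moreover have cc: "c = Complex a b" using Complex by (simp add: complex_eq_iff)
    ultimately show ?thesis unfolding f_def cc
      by (simp add: hC[of a b] hC[of "-b" a] complex_eq_iff algebra_simps)
  qed
  have fb: "cmod (f x) \<le> norm x * (2*K)" for x
  proof -
    have "cmod (f x) \<le> \<bar>h x\<bar> + \<bar>h (scaleC \<i> x)\<bar>"
      unfolding f_def using cmod_le[of "Complex (h x) (- h (scaleC \<i> x))"] by simp
    also have "\<dots> \<le> K * norm x + K * norm (scaleC \<i> x)" using habs by (intro add_mono) auto
    also have "norm (scaleC \<i> x) = norm x" by (simp add: norm_scaleC)
    finally show ?thesis by (simp add: algebra_simps)
  qed
  have fx0: "f x0 \<noteq> 0" unfolding f_def using hx0 by (simp add: complex_eq_iff)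
  have fF: "f m = 0" if "m \<in> F" for m
    unfolding f_def using hF[OF that] hF[OF csub_scaleC[OF Fs that]] by (simp add: complex_eq_iff)
  show ?thesis
  proof (intro exI[of _ "\<lambda>x. f x / f x0"] conjI allI ballI)
    show "f (x+y) / f x0 = f x / f x0 + f y / f x0" for x y by (simp add: fadd add_divide_distrib)
    show "f (scaleC c x) / f x0 = c * (f x / f x0)" for c x by (simp add: fsc)
    show "f m / f x0 = 0" if "m \<in> F" for m using fF[OF that] by simp
    show "f x0 / f x0 = 1" using fx0 by simp
    show "\<exists>K. \<forall>x. cmod (f x / f x0) \<le> norm x * K"
    proof (intro exI allI)
      fix x
      have "cmod (f x / f x0) = cmod (f x) / cmod (f x0)" by (simp add: norm_divide)
      also have "\<dots> \<le> norm x * (2*K) / cmod (f x0)" using fb fx0 by (simp add: divide_right_mono)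
      finally show "cmod (f x / f x0) \<le> norm x * (2 * K / cmod (f x0))" by simp
    qed
  qed
qed


lemma sjoin_upper: "S \<in> \<F> \<Longrightarrow> S \<subseteq> sjoin \<F>"
proof -
  assume "S \<in> \<F>"
  then have "S \<subseteq> \<Union>\<F>" by blast
  also have "\<Union>\<F> \<subseteq> cspan (\<Union>\<F>)" unfolding cspan_def by blast
  also have "cspan (\<Union>\<F>) \<subseteq> closure (cspan (\<Union>\<F>))" by (rule closure_subset)
  finally show ?thesis unfolding sjoin_def .
qed

lemma sjoin_least:
  assumes "closed_csubspace V" "\<forall>S\<in>\<F>. S \<subseteq> V" shows "sjoin \<F> \<subseteq> V"
proof -
  have "\<Union>\<F> \<subseteq> V" using assms(2) by blast
  then have "cspan (\<Union>\<F>) \<subseteq> V" using assms(1) unfolding cspan_def closed_csubspace_def by blast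
  then show ?thesis unfolding sjoin_def using assms(1) closure_minimal
    unfolding closed_csubspace_def by blast
qed

lemma core:
  assumes N: "nest \<E>" and S: "support_function \<E> \<Phi>" and F: "F \<in> \<E>" and x0: "x0 \<notin> F"
    and y: "\<forall>F'\<in>\<E>. F \<subset> F' \<longrightarrow> y \<in> \<Phi> F'"
  shows "\<exists>T \<in> M_space \<E> \<Phi>. T x0 = y"
proof -
  have FC: "closed_csubspace F" using N F by (simp add: nest_def)
  obtain \<phi> :: "'a \<Rightarrow> complex" where padd: "\<forall>x y. \<phi>(x+y) = \<phi> x + \<phi> y"
    and psc: "\<forall>c x. \<phi>(scaleC c x) = c * \<phi> x" and pb: "\<exists>K. \<forall>x. cmod(\<phi> x) \<le> norm x * K"
    and pF: "\<forall>m\<in>F. \<phi> m = 0" and p0: "\<phi> x0 = 1"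
    using sep[OF FC x0] by blast
  obtain K where K: "\<forall>x. cmod(\<phi> x) \<le> norm x * K" using pb by blast
  define T where "T x = scaleC (\<phi> x) y" for x
  have "bounded_clinear T" unfolding bounded_clinear_def clinear_def
  proof (intro conjI allI exI)
    show "T (x + x') = T x + T x'" for x x' by (simp add: T_def padd scaleC_add_left)
    show "T (scaleC c x) = scaleC c (T x)" for c x by (simp add: T_def psc scaleC_scaleC)
    show "norm (T x) \<le> norm x * (K * norm y)" for x
      using K mult_right_mono[OF spec[OF K, of x] norm_ge_zero[of y]]
      by (simp add: T_def norm_scaleC mult.assoc)
  qed
  moreover have "\<forall>E\<in>\<E>. T ` E \<subseteq> \<Phi> E"
  proof (intro ballI subsetI)
    fix E z assume E: "E \<in> \<E>" and z: "z \<in> T ` E"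
    then obtain x where x: "x \<in> E" "z = T x" by blast
    have "\<Phi> E \<in> \<E>" using S E unfolding support_function_def by blast
    then have "closed_csubspace (\<Phi> E)" using N by (simp add: nest_def)
    then have PE: "csubspace (\<Phi> E)" by (simp add: closed_csubspace_def)
    have "E \<subseteq> F \<or> F \<subseteq> E" using N E F by (simp add: nest_def)
    then have "E \<subseteq> F \<or> F \<subset> E" by blast
    then show "z \<in> \<Phi> E"
    proof
      assume "E \<subseteq> F" then have "\<phi> x = 0" using x pF by blast
      then show ?thesis using x csub_0[OF PE] by (simp add: T_def)
    next
      assume "F \<subset> E" then show ?thesis using y E x csub_scaleC[OF PE] by (simp add: T_def)
    qed
  qed
  ultimately have "T \<in> M_space \<E> \<Phi>" unfolding M_space_def by blast
  moreover have "T x0 = y" using p0 by (simp add: T_def scaleC_one)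
  ultimately show ?thesis by blast
qed

lemma half:
  fixes \<E> :: "'a::complex_normed_vector set set"
  assumes N: "nest \<E>" and A1: "admissible \<E> \<Phi>" and A2: "admissible \<E> \<Theta>"
    and MM: "M_space \<E> \<Phi> \<subseteq> M_space \<E> \<Theta>"
    and E: "E \<in> \<E>" and E0: "E \<noteq> {0}"
  shows "\<Phi> E \<subseteq> \<Theta> E"
proof -
  have S1: "support_function \<E> \<Phi>" using A1 by (simp add: admissible_def)
  have S2: "support_function \<E> \<Theta>" using A2 by (simp add: admissible_def)
  have cl: "closed_csubspace G" if "G \<in> \<E>" for G using N that by (simp add: nest_def)
  have tot: "G \<subseteq> H \<or> H \<subseteq> G" if "G \<in> \<E>" "H \<in> \<E>" for G H using N that by (simp add: nest_def)
  have Tin: "y \<in> \<Theta> G" if "T \<in> M_space \<E> \<Phi>" "G \<in> \<E>" "x0 \<in> G" "T x0 = y" for T G x0 y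
  proof -
    have "T \<in> M_space \<E> \<Theta>" using MM that(1) by blast
    then have "T ` G \<subseteq> \<Theta> G" using that(2) unfolding M_space_def by blast
    then show ?thesis using that(3,4) by blast
  qed
  define P where "P = pred_nest \<E> E"
  have jn: "sjoin X \<in> \<E>" if "X \<subseteq> \<E>" for X using N that by (simp add: nest_def)
  have PE: "P \<in> \<E>" unfolding P_def pred_nest_def by (rule jn) blast
  have PsE: "P \<subseteq> E" unfolding P_def pred_nest_def by (rule sjoin_least[OF cl[OF E]]) blast
  show ?thesis
  proof (cases "P = E")
    case False
    then obtain x0 where x0: "x0 \<in> E" "x0 \<notin> P" using PsE by blast
    show ?thesis
    proof
      fix y assume y: "y \<in> \<Phi> E"
      have "\<forall>F'\<in>\<E>. P \<subset> F' \<longrightarrow> y \<in> \<Phi> F'"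
      proof (intro ballI impI)
        fix F' assume F': "F' \<in> \<E>" "P \<subset> F'"
        have "\<not> F' \<subset> E"
        proof
          assume "F' \<subset> E"
          then have "F' \<subseteq> P" unfolding P_def pred_nest_def using F' by (intro sjoin_upper) blast
          then show False using F' by blast
        qed
        then have "E \<subseteq> F'" using tot[OF E F'(1)] by blast
        then show "y \<in> \<Phi> F'" using S1 E F' y unfolding support_function_def by blast
      qed
      from core[OF N S1 PE x0(2) this] obtain T where "T \<in> M_space \<E> \<Phi>" "T x0 = y" by blast
      then show "y \<in> \<Theta> E" using Tin[OF _ E x0(1)] by blast
    qed
  next
    case True
    have adm: "sjoin (\<Phi> ` {F\<in>\<E>. F \<subset> E}) = \<Phi> P"
      using A1 E E0 unfolding admissible_def P_def by blast
    have "sjoin (\<Phi> ` {F\<in>\<E>. F \<subset> E}) \<subseteq> \<Theta> E"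
    proof (rule sjoin_least)
      show "closed_csubspace (\<Theta> E)" using S2 E cl unfolding support_function_def by blast
      show "\<forall>S\<in>\<Phi> ` {F \<in> \<E>. F \<subset> E}. S \<subseteq> \<Theta> E"
      proof (intro ballI subsetI)
        fix S y assume S: "S \<in> \<Phi> ` {F \<in> \<E>. F \<subset> E}" and yS: "y \<in> S"
        then obtain F where F: "F \<in> \<E>" "F \<subset> E" and SF: "S = \<Phi> F" by blast
        have y: "y \<in> \<Phi> F" using yS SF by simp
        have "\<exists>G\<in>\<E>. G \<subset> E \<and> \<not> G \<subseteq> F"
        proof (rule ccontr)
          assume "\<not> ?thesis"
          then have "P \<subseteq> F" unfolding P_def pred_nest_def
            by (intro sjoin_least[OF cl[OF F(1)]]) blast
          then show False using True F by blast
        qed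
        then obtain G x0 where G: "G \<in> \<E>" "G \<subset> E" "x0 \<in> G" "x0 \<notin> F" by blast
        have "\<forall>F'\<in>\<E>. F \<subset> F' \<longrightarrow> y \<in> \<Phi> F'"
          using S1 F y unfolding support_function_def by blast
        from core[OF N S1 F(1) G(4) this] obtain T where "T \<in> M_space \<E> \<Phi>" "T x0 = y" by blast
        then have "y \<in> \<Theta> G" using Tin[OF _ G(1) G(3)] by blast
        moreover have "\<Theta> G \<subseteq> \<Theta> E" using S2 G E unfolding support_function_def by blast
        ultimately show "y \<in> \<Theta> E" by blast
      qed
    qed
    then show ?thesis using adm True by simp
  qed
qed

theorem mainTheorem4:
  fixes \<E> :: "'a::complex_banach set set"
    and \<Phi> \<Theta> :: "'a set \<Rightarrow> 'a set"
  assumes "nest \<E>"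
    and "admissible \<E> \<Phi>"
    and "admissible \<E> \<Theta>"
    and "M_space \<E> \<Phi> = M_space \<E> \<Theta>"
  shows "\<forall>E\<in>\<E>. E \<noteq> {0} \<longrightarrow> \<Phi> E = \<Theta> E"
proof (intro ballI impI)
  fix E assume E: "E \<in> \<E>" and E0: "E \<noteq> {0}"
  have 1: "M_space \<E> \<Phi> \<subseteq> M_space \<E> \<Theta>" and 2: "M_space \<E> \<Theta> \<subseteq> M_space \<E> \<Phi>"
    using assms(4) by simp_all
  show "\<Phi> E = \<Theta> E"
    by (rule subset_antisym[OF half[OF assms(1,2,3) 1 E E0] half[OF assms(1,3,2) 2 E E0]])
qed

end
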